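(* Let $k\ge 2$ and let $G=K_{n_1,n_2,\ldots,n_k}$ be the complete $k$-partite graph with part sizes $n_1,\dots,n_k$, where $n_i\ge 2$ for every $1\le i\le k$. Then $$\mathcal{R}(G)=\sum_{i=1}^k n_i\left(\frac{n_i-1}{n_i}+\sum_{\substack{t=1\\ t\neq i}}^k n_t\right)^{-1}\left(\frac{n_i-1}{2n_i}+\sum_{\substack{t=1\\ t\neq i}}^k\frac{n_t}{n_i+n_t}\right).$$
   Context: All graphs are finite, simple and connected, with at least two vertices; $d(u,v)$ denotes the shortest-path distance. $V_p$ denotes the set of all unordered pairs $(u,v)$ of distinct vertices. A vertex $x$ resolves the pair $(u,v)$ if $d(x,u)\neq d(x,v)$. For $(u,v)\in V_p$, $R(u,v)$ is the set of all vertices resolving $(u,v)$ (it always contains $u$ and $v$). The resolving share of a vertex $w$ for $(u,v)$ is $r_w(u,v)=\frac{1}{|R(u,v)|}$ if $w$ resolves $u$ and $v$, and $r_w(u,v)=0$ otherwise. For a vertex $w$, $R(w)$ is the set of pairs in $V_p$ resolved by $w$. The average resolving share of $w$ is $ar_w(G)=\frac{1}{|R(w)|}\sum_{(u,v)\in R(w)} r_w(u,v)$, and the resolving topological index of $G$ is $\mathcal{R}(G)=\sum_{w\in V(G)} ar_w(G)$. *)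

theory Defs
  imports Complex_Main
begin

text \<open>A simple graph is given by a finite vertex set V and a symmetric irreflexive
edge predicate E with edges only between vertices of V.\<close>

definition graph_dist :: "('a \<Rightarrow> 'a \<Rightarrow> bool) \<Rightarrow> 'a \<Rightarrow> 'a \<Rightarrow> nat" where
  "graph_dist E u v = (LEAST n. (E ^^ n) u v)"

definition resolves :: "('a \<Rightarrow> 'a \<Rightarrow> bool) \<Rightarrow> 'a \<Rightarrow> 'a set \<Rightarrow> bool" where
  "resolves E x p = (\<exists>u v. p = {u, v} \<and> graph_dist E x u \<noteq> graph_dist E x v)"

definition vpairs :: "'a set \<Rightarrow> 'a set set" where
  "vpairs V = {{u, v} | u v. u \<in> V \<and> v \<in> V \<and> u \<noteq> v}"

definition resolving_set :: "'a set \<Rightarrow> ('a \<Rightarrow> 'a \<Rightarrow> bool) \<Rightarrow> 'a set \<Rightarrow> 'a set" where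
  "resolving_set V E p = {x \<in> V. resolves E x p}"

definition resolving_share :: "'a set \<Rightarrow> ('a \<Rightarrow> 'a \<Rightarrow> bool) \<Rightarrow> 'a \<Rightarrow> 'a set \<Rightarrow> real" where
  "resolving_share V E w p =
     (if resolves E w p then 1 / real (card (resolving_set V E p)) else 0)"

definition resolved_pairs :: "'a set \<Rightarrow> ('a \<Rightarrow> 'a \<Rightarrow> bool) \<Rightarrow> 'a \<Rightarrow> 'a set set" where
  "resolved_pairs V E w = {p \<in> vpairs V. resolves E w p}"

definition avg_resolving_share :: "'a set \<Rightarrow> ('a \<Rightarrow> 'a \<Rightarrow> bool) \<Rightarrow> 'a \<Rightarrow> real" where
  "avg_resolving_share V E w =
     (1 / real (card (resolved_pairs V E w))) *
     (\<Sum>p\<in>resolved_pairs V E w. resolving_share V E w p)"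

definition resolving_index :: "'a set \<Rightarrow> ('a \<Rightarrow> 'a \<Rightarrow> bool) \<Rightarrow> real" where
  "resolving_index V E = (\<Sum>w\<in>V. avg_resolving_share V E w)"

text \<open>Complete k-partite graph with parts of sizes n 0, ..., n (k-1):
vertex (i,j) is the j-th vertex of part i; two vertices are adjacent iff they lie in
different parts.\<close>
definition kpart_V :: "nat \<Rightarrow> (nat \<Rightarrow> nat) \<Rightarrow> (nat \<times> nat) set" where
  "kpart_V k n = {(i, j). i < k \<and> j < n i}"

definition kpart_E :: "nat \<Rightarrow> (nat \<Rightarrow> nat) \<Rightarrow> nat \<times> nat \<Rightarrow> nat \<times> nat \<Rightarrow> bool" where
  "kpart_E k n x y = (x \<in> kpart_V k n \<and> y \<in> kpart_V k n \<and> fst x \<noteq> fst y)"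

end

theory Submission
  imports Defs
begin

lemma relpow2: "((E::'a\<Rightarrow>'a\<Rightarrow>bool) ^^ Suc (Suc 0)) x y = (\<exists>z. E x z \<and> E z y)"
  by (auto simp: relcompp_apply)

lemma resolves_pair: "resolves E w {a,b} \<longleftrightarrow> graph_dist E w a \<noteq> graph_dist E w b"
  unfolding resolves_def by (auto simp: doubleton_eq_iff)

context
  fixes k :: nat and n :: "nat \<Rightarrow> nat"
  assumes k2: "k \<ge> 2" and n2: "\<And>i. i < k \<Longrightarrow> n i \<ge> 2"
begin

lemma dist:
  assumes x: "x \<in> kpart_V k n" and y: "y \<in> kpart_V k n"
  shows "graph_dist (kpart_E k n) x y = (if x = y then 0 else if fst x = fst y then 2 else 1)"
proof -
  let ?E = "kpart_E k n"
  show ?thesis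
  proof (cases "x = y")
    case True thus ?thesis unfolding graph_dist_def by (simp add: Least_eq_0)
  next
    case ne: False
    show ?thesis
    proof (cases "fst x = fst y")
      case False
      have "(LEAST m. (?E ^^ m) x y) = 1"
      proof (rule Least_equality)
        show "(?E ^^ 1) x y" using False x y by (auto simp: kpart_E_def)
      next
        fix m assume "(?E ^^ m) x y"
        thus "1 \<le> m" using ne by (cases m) auto
      qed
      thus ?thesis using ne False unfolding graph_dist_def by simp
    next
      case True
      define i' where "i' = (if fst x = 0 then 1 else 0::nat)"
      have "i' < k" "i' \<noteq> fst x" using k2 by (auto simp: i'_def)
      moreover have "n i' \<ge> 2" using n2 \<open>i' < k\<close> by auto
      ultimately have z: "(i', 0) \<in> kpart_V k n" "i' \<noteq> fst x" by (auto simp: kpart_V_def)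
      have "(LEAST m. (?E ^^ m) x y) = 2"
      proof (rule Least_equality)
        show "(?E ^^ 2) x y" unfolding numeral_2_eq_2 relpow2
          using z x y True by (auto simp: kpart_E_def)
      next
        fix m assume "(?E ^^ m) x y"
        thus "2 \<le> m" using ne True
          by (cases m; cases "m - 1") (auto simp: kpart_E_def)
      qed
      thus ?thesis using ne True unfolding graph_dist_def by simp
    qed
  qed
qed

abbreviation "VV \<equiv> kpart_V k n"
abbreviation "EE \<equiv> kpart_E k n"
definition "PP i = {i} \<times> {..<n i}"

lemma V_Sigma: "VV = Sigma {..<k} (\<lambda>i. {..<n i})"
  by (auto simp: kpart_V_def)

lemma PP_sub: "i < k \<Longrightarrow> PP i \<subseteq> VV"
  by (auto simp: kpart_V_def PP_def)

lemma card_PP: "card (PP i) = n i"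
  by (simp add: PP_def card_cartesian_product)

lemma res_iff:
  assumes "w \<in> VV" "a \<in> VV" "b \<in> VV"
  shows "resolves EE w {a,b} \<longleftrightarrow>
    (if w = a then 0 else if fst w = fst a then 2 else 1::nat) \<noteq> (if w = b then 0 else if fst w = fst b then 2 else 1)"
  using assms by (simp add: resolves_pair dist)

lemma RS:
  assumes a: "a \<in> VV" and b: "b \<in> VV" and ab: "a \<noteq> b"
  shows "resolving_set VV EE {a,b} = (if fst a = fst b then {a,b} else PP (fst a) \<union> PP (fst b))"
proof (cases "fst a = fst b")
  case True
  show ?thesis using True a b ab
    by (auto simp: resolving_set_def res_iff PP_def split: if_splits)
next
  case False
  have "x \<in> resolving_set VV EE {a,b} \<longleftrightarrow> x \<in> PP (fst a) \<union> PP (fst b)" for x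
  proof
    assume "x \<in> resolving_set VV EE {a,b}"
    then have "x \<in> VV" "resolves EE x {a,b}" by (auto simp: resolving_set_def)
    thus "x \<in> PP (fst a) \<union> PP (fst b)" using a b ab False
      by (cases x) (auto simp: res_iff PP_def kpart_V_def split: if_splits)
  next
    assume x: "x \<in> PP (fst a) \<union> PP (fst b)"
    then have "x \<in> VV" using a b by (auto simp: kpart_V_def PP_def)
    moreover have "resolves EE x {a,b}" using x a b ab False \<open>x \<in> VV\<close>
      by (auto simp: res_iff PP_def)
    ultimately show "x \<in> resolving_set VV EE {a,b}" by (simp add: resolving_set_def)
  qed
  thus ?thesis using False by auto
qed

lemma card_RS:
  assumes a: "a \<in> VV" and b: "b \<in> VV" and ab: "a \<noteq> b"
  shows "real (card (resolving_set VV EE {a,b})) =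
     (if fst a = fst b then 2 else real (n (fst a)) + real (n (fst b)))"
proof -
  have "fst a \<noteq> fst b \<Longrightarrow> card (PP (fst a) \<union> PP (fst b)) = n (fst a) + n (fst b)"
    by (subst card_Un_disjoint) (auto simp: PP_def card_PP[unfolded PP_def])
  thus ?thesis using ab by (simp add: RS[OF a b ab])
qed

lemma VV_minus_PP: "i < k \<Longrightarrow> VV - PP i = Sigma ({..<k} - {i}) (\<lambda>t. {..<n t})"
  by (auto simp: kpart_V_def PP_def)

lemma sum_VV_minus_PP:
  assumes "i < k"
  shows "(\<Sum>x\<in>VV - PP i. f (fst x)) = (\<Sum>t\<in>{..<k} - {i}. real (n t) * f t)"
proof -
  have "(\<Sum>x\<in>VV - PP i. f (fst x)) = (\<Sum>(t,j)\<in>Sigma ({..<k} - {i}) (\<lambda>t. {..<n t}). f t)"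
    by (simp add: VV_minus_PP[OF assms] case_prod_beta)
  also have "\<dots> = (\<Sum>t\<in>{..<k} - {i}. \<Sum>j<n t. f t)"
    by (rule sum.Sigma[symmetric]) auto
  finally show ?thesis by simp
qed

lemma card_VV_minus_PP:
  assumes "i < k"
  shows "real (card (VV - PP i)) = (\<Sum>t\<in>{..<k} - {i}. real (n t))"
  using sum_VV_minus_PP[OF assms, of "\<lambda>_. 1"] by simp

lemma finite_VV: "finite VV"
  by (simp add: V_Sigma)

lemma resolved_decomp:
  assumes w: "w \<in> VV"
  shows "resolved_pairs VV EE w =
    (\<lambda>x. {w,x}) ` (VV - {w}) \<union> (\<lambda>(a,b). {a,b}) ` ((PP (fst w) - {w}) \<times> (VV - PP (fst w)))"
proof (rule set_eqI)
  fix p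
  show "p \<in> resolved_pairs VV EE w \<longleftrightarrow> p \<in> (\<lambda>x. {w,x}) ` (VV - {w}) \<union> (\<lambda>(a,b). {a,b}) ` ((PP (fst w) - {w}) \<times> (VV - PP (fst w)))"
  proof
    assume "p \<in> resolved_pairs VV EE w"
    then obtain u v where p: "p = {u,v}" and u: "u \<in> VV" and v: "v \<in> VV" and uv: "u \<noteq> v"
      and r: "resolves EE w {u,v}"
      by (auto simp: resolved_pairs_def vpairs_def)
    show "p \<in> (\<lambda>x. {w,x}) ` (VV - {w}) \<union> (\<lambda>(a,b). {a,b}) ` ((PP (fst w) - {w}) \<times> (VV - PP (fst w)))"
    proof (cases "u = w \<or> v = w")
      case True
      then show ?thesis using p u v uv by (auto simp: insert_commute)
    next
      case False
      have "(fst u = fst w \<and> fst v \<noteq> fst w) \<or> (fst v = fst w \<and> fst u \<noteq> fst w)"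
        using r False by (auto simp: res_iff[OF w u v] split: if_splits)
      then show ?thesis
      proof
        assume h: "fst u = fst w \<and> fst v \<noteq> fst w"
        have "(u, v) \<in> (PP (fst w) - {w}) \<times> (VV - PP (fst w))"
          using h u v False by (cases u, cases v) (auto simp: PP_def kpart_V_def)
        then show ?thesis using p by blast
      next
        assume h: "fst v = fst w \<and> fst u \<noteq> fst w"
        have "(v, u) \<in> (PP (fst w) - {w}) \<times> (VV - PP (fst w))"
          using h u v False by (cases u, cases v) (auto simp: PP_def kpart_V_def)
        then show ?thesis using p by (auto simp: insert_commute intro!: image_eqI[where x="(v,u)"])
      qed
    qed
  next
    assume "p \<in> (\<lambda>x. {w,x}) ` (VV - {w}) \<union> (\<lambda>(a,b). {a,b}) ` ((PP (fst w) - {w}) \<times> (VV - PP (fst w)))"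
    then show "p \<in> resolved_pairs VV EE w"
    proof
      assume "p \<in> (\<lambda>x. {w,x}) ` (VV - {w})"
      then obtain x where "p = {w,x}" "x \<in> VV" "x \<noteq> w" by auto
      moreover have "{w,x} \<in> vpairs VV" using \<open>x \<in> VV\<close> \<open>x \<noteq> w\<close> w unfolding vpairs_def by blast
      ultimately show ?thesis using w by (auto simp: resolved_pairs_def res_iff)
    next
      assume "p \<in> (\<lambda>(a,b). {a,b}) ` ((PP (fst w) - {w}) \<times> (VV - PP (fst w)))"
      then obtain a b where ab: "p = {a,b}" "a \<in> PP (fst w) - {w}" "b \<in> VV - PP (fst w)" by auto
      have a: "a \<in> VV" using ab w by (auto simp: PP_def kpart_V_def)
      have fa: "fst a = fst w" "fst b \<noteq> fst w" using ab by (cases b; auto simp: PP_def kpart_V_def)+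
      have "a \<noteq> b" "b \<noteq> w" using fa by auto
      moreover have "{a,b} \<in> vpairs VV" using a ab \<open>a \<noteq> b\<close> unfolding vpairs_def by blast
      ultimately show ?thesis using ab a fa w
        by (auto simp: resolved_pairs_def res_iff)
    qed
  qed
qed

lemma w_PP: "w \<in> VV \<Longrightarrow> w \<in> PP (fst w)"
  by (auto simp: kpart_V_def PP_def)

lemma fst_lt: "w \<in> VV \<Longrightarrow> fst w < k"
  by (auto simp: kpart_V_def)

lemma avg:
  assumes w: "w \<in> VV"
  defines "i \<equiv> fst w"
  defines "S \<equiv> (\<Sum>t\<in>{..<k} - {i}. real (n t))"
  defines "T \<equiv> (\<Sum>t\<in>{..<k} - {i}. real (n t) / (real (n i) + real (n t)))"
  shows "avg_resolving_share VV EE w =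
     (1 / ((real (n i) - 1) + S + (real (n i) - 1) * S)) * ((real (n i) - 1) / 2 + T + (real (n i) - 1) * T)"
proof -
  have ik: "i < k" using fst_lt[OF w] i_def by simp
  have wP: "w \<in> PP i" using w_PP[OF w] i_def by simp
  define A where "A = VV - {w}"
  define B where "B = (PP i - {w}) \<times> (VV - PP i)"
  define f1 where "f1 = (\<lambda>x. {w,x})"
  define f2 where "f2 = (\<lambda>(a::nat\<times>nat,b). {a,b})"
  have dec: "resolved_pairs VV EE w = f1 ` A \<union> f2 ` B"
    unfolding A_def B_def f1_def f2_def i_def by (rule resolved_decomp[OF w])
  have finA: "finite A" and finB: "finite B" using finite_VV
    by (auto simp: A_def B_def PP_def)
  have inj1: "inj_on f1 A" by (auto simp: inj_on_def f1_def doubleton_eq_iff)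
  have Bfst: "(a,b) \<in> B \<Longrightarrow> fst a = i \<and> fst b \<noteq> i \<and> a \<noteq> w \<and> b \<noteq> w \<and> a \<in> VV \<and> b \<in> VV" for a b
    using w by (cases b; auto simp: B_def PP_def kpart_V_def i_def)
  have inj2: "inj_on f2 B"
  proof (rule inj_onI)
    fix x y assume "x \<in> B" "y \<in> B" "f2 x = f2 y"
    moreover obtain a b c d where xy: "x = (a,b)" "y = (c,d)" by (cases x, cases y)
    ultimately have "a \<in> PP i" "c \<in> PP i" "b \<notin> PP i" "d \<notin> PP i" "{a,b} = {c,d}"
      by (auto simp: B_def f2_def)
    then show "x = y" using xy by (auto simp: doubleton_eq_iff)
  qed
  have disj: "f1 ` A \<inter> f2 ` B = {}"
  proof -
    have "w \<notin> f2 p" if "p \<in> B" for p using that Bfst by (cases p) (auto simp: f2_def)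
    moreover have "w \<in> f1 x" for x by (simp add: f1_def)
    ultimately show ?thesis by blast
  qed
  have A_split: "A = (PP i - {w}) \<union> (VV - PP i)" and A_disj: "(PP i - {w}) \<inter> (VV - PP i) = {}"
    using wP PP_sub[OF ik] by (auto simp: A_def)
  have finP: "finite (PP i)" by (simp add: PP_def)
  have cP: "real (card (PP i - {w})) = real (n i) - 1"
    using wP finP card_PP[of i] n2[OF ik] by (simp add: of_nat_diff)
  have cA: "real (card A) = real (n i) - 1 + S"
    unfolding A_split using A_disj finP finite_VV
    by (subst card_Un_disjoint) (auto simp: cP card_VV_minus_PP[OF ik] S_def)
  have cB: "real (card B) = (real (n i) - 1) * S"
    unfolding B_def by (simp add: card_cartesian_product cP card_VV_minus_PP[OF ik] S_def)
  have card: "real (card (resolved_pairs VV EE w)) = (real (n i) - 1) + S + (real (n i) - 1) * S"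
    unfolding dec using finA finB disj
    by (simp add: card_Un_disjoint card_image[OF inj1] card_image[OF inj2] cA cB)
  have sh1: "resolving_share VV EE w (f1 x) =
      (if fst x = i then 1/2 else 1 / (real (n i) + real (n (fst x))))" if "x \<in> A" for x
  proof -
    have x: "x \<in> VV" "x \<noteq> w" using that by (auto simp: A_def)
    have "resolves EE w {w,x}" using x w by (simp add: res_iff)
    thus ?thesis using card_RS[OF w x(1) x(2)[symmetric]] by (simp add: resolving_share_def f1_def i_def)
  qed
  have sh2: "resolving_share VV EE w (f2 p) = 1 / (real (n i) + real (n (fst (snd p))))" if "p \<in> B" for p
  proof -
    obtain a b where p: "p = (a,b)" by (cases p)
    have h: "fst a = i" "fst b \<noteq> i" "a \<noteq> w" "b \<noteq> w" "a \<in> VV" "b \<in> VV"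
      using Bfst that p by auto
    have ab: "a \<noteq> b" using h by auto
    have "resolves EE w {a,b}" using h w by (simp add: res_iff i_def)
    thus ?thesis using card_RS[OF h(5) h(6) ab] h p by (simp add: resolving_share_def f2_def)
  qed
  have s1: "(\<Sum>p\<in>f1 ` A. resolving_share VV EE w p) = (real (n i) - 1) / 2 + T"
  proof -
    have "(\<Sum>p\<in>f1 ` A. resolving_share VV EE w p) = (\<Sum>x\<in>A. resolving_share VV EE w (f1 x))"
      by (rule sum.reindex[OF inj1, unfolded comp_def])
    also have "\<dots> = (\<Sum>x\<in>A. (if fst x = i then 1/2 else 1 / (real (n i) + real (n (fst x)))))"
      by (rule sum.cong) (auto simp: sh1)
    also have "\<dots> = (\<Sum>x\<in>PP i - {w}. (if fst x = i then 1/2 else 1 / (real (n i) + real (n (fst x)))))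
        + (\<Sum>x\<in>VV - PP i. (if fst x = i then 1/2 else 1 / (real (n i) + real (n (fst x)))))"
      unfolding A_split using A_disj finP finite_VV by (subst sum.union_disjoint) auto
    also have "(\<Sum>x\<in>PP i - {w}. (if fst x = i then 1/2 else 1 / (real (n i) + real (n (fst x))))) = (\<Sum>x\<in>PP i - {w}. 1/2)"
      by (rule sum.cong) (auto simp: PP_def)
    also have "\<dots> = (real (n i) - 1) / 2" using cP by simp
    also have "(\<Sum>x\<in>VV - PP i. (if fst x = i then 1/2 else 1 / (real (n i) + real (n (fst x)))))
        = (\<Sum>t\<in>{..<k} - {i}. real (n t) * (if t = i then 1/2 else 1 / (real (n i) + real (n t))))"
      using sum_VV_minus_PP[OF ik, of "\<lambda>t. if t = i then 1/2 else 1 / (real (n i) + real (n t))"] by simp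
    also have "\<dots> = T" unfolding T_def by (rule sum.cong) auto
    finally show ?thesis .
  qed
  have s2: "(\<Sum>p\<in>f2 ` B. resolving_share VV EE w p) = (real (n i) - 1) * T"
  proof -
    have "(\<Sum>p\<in>f2 ` B. resolving_share VV EE w p) = (\<Sum>p\<in>B. resolving_share VV EE w (f2 p))"
      by (rule sum.reindex[OF inj2, unfolded comp_def])
    also have "\<dots> = (\<Sum>p\<in>B. 1 / (real (n i) + real (n (fst (snd p)))))"
      by (rule sum.cong) (auto simp: sh2)
    also have "\<dots> = (\<Sum>a\<in>PP i - {w}. \<Sum>b\<in>VV - PP i. 1 / (real (n i) + real (n (fst b))))"
      unfolding B_def using sum.cartesian_product[where g="\<lambda>a b. 1 / (real (n i) + real (n (fst b)))" and A="PP i - {w}" and B="VV - PP i"]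
      by (simp add: case_prod_beta del: sum_constant)
    also have "\<dots> = (\<Sum>a\<in>PP i - {w}. T)"
    proof (rule sum.cong[OF refl])
      fix a
      have "(\<Sum>b\<in>VV - PP i. (\<lambda>t. 1 / (real (n i) + real (n t))) (fst b)) = (\<Sum>t\<in>{..<k} - {i}. real (n t) * (1 / (real (n i) + real (n t))))"
        by (rule sum_VV_minus_PP[OF ik])
      thus "(\<Sum>b\<in>VV - PP i. 1 / (real (n i) + real (n (fst b)))) = T" by (simp add: T_def)
    qed
    also have "\<dots> = (real (n i) - 1) * T" using cP by simp
    finally show ?thesis .
  qed
  have "(\<Sum>p\<in>resolved_pairs VV EE w. resolving_share VV EE w p) = (real (n i) - 1) / 2 + T + (real (n i) - 1) * T"
    unfolding dec using finA finB disj by (simp add: sum.union_disjoint s1 s2)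
  then show ?thesis unfolding avg_resolving_share_def card by simp
qed

lemma main: "resolving_index (kpart_V k n) (kpart_E k n) =
    (\<Sum>i<k. real (n i) *
       inverse ((real (n i) - 1) / real (n i) + (\<Sum>t\<in>{..<k} - {i}. real (n t))) *
       ((real (n i) - 1) / (2 * real (n i)) +
        (\<Sum>t\<in>{..<k} - {i}. real (n t) / (real (n i) + real (n t)))))"
proof -
  define S where "S i = (\<Sum>t\<in>{..<k} - {i}. real (n t))" for i
  define T where "T i = (\<Sum>t\<in>{..<k} - {i}. real (n t) / (real (n i) + real (n t)))" for i
  define F where "F i = (1 / ((real (n i) - 1) + S i + (real (n i) - 1) * S i)) * ((real (n i) - 1) / 2 + T i + (real (n i) - 1) * T i)" for i
  have "resolving_index VV EE = (\<Sum>w\<in>Sigma {..<k} (\<lambda>i. {..<n i}). avg_resolving_share VV EE w)"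
    unfolding resolving_index_def V_Sigma[symmetric] ..
  also have "\<dots> = (\<Sum>w\<in>Sigma {..<k} (\<lambda>i. {..<n i}). F (fst w))"
    by (rule sum.cong[OF refl]) (simp add: avg V_Sigma[symmetric] F_def S_def T_def)
  also have "\<dots> = (\<Sum>i<k. \<Sum>j<n i. F i)"
    using sum.Sigma[where A="{..<k}" and B="\<lambda>i. {..<n i}" and g="\<lambda>i j. F i"]
    by (simp add: case_prod_beta)
  also have "\<dots> = (\<Sum>i<k. real (n i) * F i)" by simp
  also have "\<dots> = (\<Sum>i<k. real (n i) *
       inverse ((real (n i) - 1) / real (n i) + S i) *
       ((real (n i) - 1) / (2 * real (n i)) + T i))"
  proof (rule sum.cong[OF refl])
    fix i assume "i \<in> {..<k}"
    then have ni: "real (n i) \<ge> 2" using n2 by force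
    have S0: "S i \<ge> 0" unfolding S_def by (rule sum_nonneg) auto
    have d: "(real (n i) - 1) + S i + (real (n i) - 1) * S i = real (n i) * ((real (n i) - 1) / real (n i) + S i)"
      using ni by (simp add: field_simps)
    have e: "(real (n i) - 1) / 2 + T i + (real (n i) - 1) * T i = real (n i) * ((real (n i) - 1) / (2 * real (n i)) + T i)"
      using ni by (simp add: field_simps)
    have pos: "(real (n i) - 1) / real (n i) + S i > 0" using ni S0
      by (smt (verit) divide_pos_pos)
    show "real (n i) * F i = real (n i) * inverse ((real (n i) - 1) / real (n i) + S i) * ((real (n i) - 1) / (2 * real (n i)) + T i)"
    proof -
      have gen: "a * (1 / (a * X) * (a * Y)) = a * inverse X * Y" if "a \<noteq> 0" for a X Y :: real
        using that by (simp add: divide_inverse mult.assoc mult.left_commute)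
      show ?thesis unfolding F_def d e by (rule gen) (use ni in simp)
    qed
  qed
  finally show ?thesis by (simp add: S_def T_def)
qed

end

theorem theorem3p10:
  fixes k :: nat and n :: "nat \<Rightarrow> nat"
  assumes "k \<ge> 2" and "\<And>i. i < k \<Longrightarrow> n i \<ge> 2"
  shows "resolving_index (kpart_V k n) (kpart_E k n) =
    (\<Sum>i<k. real (n i) *
       inverse ((real (n i) - 1) / real (n i) + (\<Sum>t\<in>{..<k} - {i}. real (n t))) *
       ((real (n i) - 1) / (2 * real (n i)) +
        (\<Sum>t\<in>{..<k} - {i}. real (n t) / (real (n i) + real (n t)))))"
  by (rule main[OF assms])

end
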